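(* Let $G$ be an abelian group and $\underline{g}=(g_1,\dots,g_m)\in G^m$. If $\mathcal{B}(\mathrm{supp}(\underline{g}))$ has a quadratic Gröbner system, then $\mathcal{B}(\underline{g})$ also has a quadratic Gröbner system, and hence the semigroup algebra $\mathbb{C}[\mathcal{B}(\underline{g})]$ is Koszul.
   Context: $G$ is written multiplicatively. $\mathcal{B}(\underline{g})=\{\alpha\in\mathbb{N}_0^m\mid\prod_i g_i^{\alpha_i}=1\}$ (submonoid of $(\mathbb{N}_0^m,+)$); $\mathrm{supp}(\underline{g})=\{g_1,\dots,g_m\}$, and for a finite $G_0\subseteq G$, $\mathcal{B}(G_0)=\{\alpha\in\mathbb{N}_0^{G_0}\mid\prod_{g\in G_0}g^{\alpha(g)}=1\}$. For a reduced affine monoid $T$ with (finite) atom set $\mathcal{A}(T)$, its defining congruence $\sim_T$ is the congruence on the free commutative monoid $\{x^{\alpha}\mid\alpha\in\mathbb{N}_0^{\mathcal{A}(T)}\}$ with $x^{\alpha}\sim_T x^{\gamma}$ iff $\sum\alpha(t)t=\sum\gamma(t)t$ in $T$. "$T$ has a quadratic Gröbner system" means: for some admissible total order $\prec$ (total order with $x\prec y\Rightarrow xz\prec yz$ and $1\prec x$ for $x\ne1$) there is a finite set $\Lambda$ of pairs with $x\sim_T y$, $y\prec x$ for all $(x,y)\in\Lambda$, every element not divisible by a first component of a pair of $\Lambda$ being $\prec$-minimal in its $\sim_T$-class, and $|\lambda|,|\mu|\le2$ for all $(x^{\lambda},x^{\mu})\in\Lambda$. *)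

theory Defs
  imports "HOL-Algebra.FiniteProduct" "HOL-Library.Multiset" "HOL-Library.Function_Algebras"
begin

text \<open>Exponent vectors in N_0^I are functions 'i => nat vanishing outside I.
  BG G g I is the monoid of alpha in N_0^I with prod_{i in I} (g i)^(alpha i) = 1.
  B(g_1..g_m) = BG G g {..<m};  B(G0) = BG G id G0.\<close>

definition BG :: "('a, 'b) monoid_scheme \<Rightarrow> ('i \<Rightarrow> 'a) \<Rightarrow> 'i set \<Rightarrow> ('i \<Rightarrow> nat) set" where
  "BG G g I = {\<alpha>. (\<forall>i. i \<notin> I \<longrightarrow> \<alpha> i = 0) \<and>
                   finprod G (\<lambda>i. g i [^]\<^bsub>G\<^esub> \<alpha> i) I = \<one>\<^bsub>G\<^esub>}"

definition atoms :: "('i \<Rightarrow> nat) set \<Rightarrow> ('i \<Rightarrow> nat) set" where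
  "atoms T = {a \<in> T. a \<noteq> 0 \<and> (\<forall>b c. b \<in> T \<longrightarrow> c \<in> T \<longrightarrow> a = b + c \<longrightarrow> b = 0 \<or> c = 0)}"

text \<open>Monomials x^lambda of the free commutative monoid on a set A are multisets over A
  (product = multiset sum, 1 = empty multiset, degree |lambda| = size).
  An admissible order is given by its strict part, a strict total order on these monomials.\<close>
definition admissible_order :: "'m set \<Rightarrow> ('m multiset \<Rightarrow> 'm multiset \<Rightarrow> bool) \<Rightarrow> bool" where
  "admissible_order A lt \<longleftrightarrow>
     (\<forall>x. set_mset x \<subseteq> A \<longrightarrow> \<not> lt x x) \<and>
     (\<forall>x y z. set_mset x \<subseteq> A \<longrightarrow> set_mset y \<subseteq> A \<longrightarrow> set_mset z \<subseteq> A \<longrightarrow>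
        lt x y \<longrightarrow> lt y z \<longrightarrow> lt x z) \<and>
     (\<forall>x y. set_mset x \<subseteq> A \<longrightarrow> set_mset y \<subseteq> A \<longrightarrow> x \<noteq> y \<longrightarrow> lt x y \<or> lt y x) \<and>
     (\<forall>x y z. set_mset x \<subseteq> A \<longrightarrow> set_mset y \<subseteq> A \<longrightarrow> set_mset z \<subseteq> A \<longrightarrow>
        lt x y \<longrightarrow> lt (x + z) (y + z)) \<and>
     (\<forall>x. set_mset x \<subseteq> A \<longrightarrow> x \<noteq> {#} \<longrightarrow> lt {#} x)"

definition def_cong :: "('i \<Rightarrow> nat) multiset \<Rightarrow> ('i \<Rightarrow> nat) multiset \<Rightarrow> bool" where
  "def_cong x y \<longleftrightarrow> sum_mset x = sum_mset y"

definition has_quadratic_groebner_system :: "('i \<Rightarrow> nat) set \<Rightarrow> bool" where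
  "has_quadratic_groebner_system T \<longleftrightarrow>
     (\<exists>lt \<Lambda>. admissible_order (atoms T) lt \<and> finite \<Lambda> \<and>
        (\<forall>(x, y) \<in> \<Lambda>. set_mset x \<subseteq> atoms T \<and> set_mset y \<subseteq> atoms T \<and>
            def_cong x y \<and> lt y x \<and> size x \<le> 2 \<and> size y \<le> 2) \<and>
        (\<forall>z. set_mset z \<subseteq> atoms T \<longrightarrow> (\<forall>(x, y) \<in> \<Lambda>. \<not> x \<subseteq># z) \<longrightarrow>
            (\<forall>w. set_mset w \<subseteq> atoms T \<longrightarrow> def_cong w z \<longrightarrow> w \<noteq> z \<longrightarrow> lt z w)))"

end

theory Submission
  imports Defs "HOL-Library.Ramsey" "HOL-Library.Multiset_Order"
begin

lemma dickson_aux: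
  fixes h :: "nat \<Rightarrow> 'i \<Rightarrow> nat"
  assumes "finite S"
  shows "infinite Z \<Longrightarrow> \<exists>Y\<subseteq>Z. infinite Y \<and> (\<forall>i\<in>Y. \<forall>k\<in>Y. i < k \<longrightarrow> (\<forall>s\<in>S. h i s \<le> h k s))"
  using assms
proof (induction S arbitrary: Z rule: finite_induct)
  case empty
  then show ?case by blast
next
  case (insert s S0)
  obtain Y0 where Y0: "Y0 \<subseteq> Z" "infinite Y0" "\<forall>i\<in>Y0. \<forall>k\<in>Y0. i < k \<longrightarrow> (\<forall>s\<in>S0. h i s \<le> h k s)"
    using insert by blast
  define f where "f X = (if h (Min X) s \<le> h (Max X) s then 0 else (1::nat))" for X :: "nat set"
  have "\<forall>x\<in>Y0. \<forall>y\<in>Y0. x \<noteq> y \<longrightarrow> f {x, y} < 2" by (auto simp: f_def)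
  from Ramsey2[OF Y0(2) this] obtain Y t where Y: "Y \<subseteq> Y0" "infinite Y" "t < 2"
    "\<forall>x\<in>Y. \<forall>y\<in>Y. x\<noteq>y \<longrightarrow> f {x, y} = t" by blast
  show ?case
  proof (cases "t = 0")
    case True
    have "\<forall>i\<in>Y. \<forall>k\<in>Y. i < k \<longrightarrow> h i s \<le> h k s"
    proof (intro ballI impI)
      fix i k assume "i \<in> Y" "k \<in> Y" "i < k"
      then have "f {i,k} = 0" using Y True by auto
      then show "h i s \<le> h k s" using \<open>i < k\<close> by (auto simp: f_def split: if_splits)
    qed
    then have "\<forall>i\<in>Y. \<forall>k\<in>Y. i < k \<longrightarrow> (\<forall>s'\<in>insert s S0. h i s' \<le> h k s')"
      using Y(1) Y0(3) by blast
    then show ?thesis using Y Y0 by (intro exI[of _ Y]) auto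
  next
    case False
    then have t1: "t = 1" using Y by auto
    define e where "e = enumerate Y"
    have sm: "strict_mono e" unfolding e_def using Y(2) by (rule strict_mono_enumerate)
    have eY: "e n \<in> Y" for n unfolding e_def using Y(2) by (rule enumerate_in_set)
    have dec: "h (e (Suc n)) s < h (e n) s" for n
    proof -
      have "e n < e (Suc n)" using sm by (simp add: strict_mono_def)
      moreover have "f {e n, e (Suc n)} = 1" using Y t1 eY \<open>e n < e (Suc n)\<close> by (metis less_irrefl)
      ultimately show ?thesis by (auto simp: f_def split: if_splits)
    qed
    have "h (e n) s + n \<le> h (e 0) s" for n
    proof (induction n)
      case (Suc n) then show ?case using dec[of n] by linarith
    qed simp
    from this[of "Suc (h (e 0) s)"] show ?thesis by simp
  qed
qed

lemma finite_antichain: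
  fixes X :: "('i \<Rightarrow> nat) set"
  assumes "finite S" "\<forall>x\<in>X. \<forall>s. s \<notin> S \<longrightarrow> x s = 0" "\<forall>x\<in>X. \<forall>y\<in>X. x \<le> y \<longrightarrow> x = y"
  shows "finite X"
proof (rule ccontr)
  assume "infinite X"
  then obtain h :: "nat \<Rightarrow> _" where h: "inj h" "range h \<subseteq> X" using infinite_countable_subset by blast
  obtain Y where Y: "infinite Y" "\<forall>i\<in>Y. \<forall>k\<in>Y. i < k \<longrightarrow> (\<forall>s\<in>S. h i s \<le> h k s)"
    using dickson_aux[OF assms(1), of UNIV h] by auto
  from infinite_imp_nonempty[OF Y(1)] obtain i where i: "i \<in> Y" by blast
  obtain k where k: "k \<in> Y" "i < k" using Y(1) by (meson infinite_nat_iff_unbounded)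
  have "h i \<le> h k"
    unfolding le_fun_def
  proof
    fix s show "h i s \<le> h k s"
    proof (cases "s \<in> S")
      case True then show ?thesis using Y i k by blast
    next
      case False then have "h i s = 0" using h assms(2) by blast
      then show ?thesis by simp
    qed
  qed
  then have "h i = h k" using assms(3) h by blast
  then show False using h(1) k(2) by (simp add: inj_eq)
qed


lemma BG_diff:
  fixes G (structure)
  assumes "comm_group G" "g ` K \<subseteq> carrier G" "a \<in> BG G g K" "b \<in> BG G g K" "a \<le> b"
  shows "b - a \<in> BG G g K"
proof -
  interpret comm_group G by fact
  have gc: "\<And>i. i \<in> K \<Longrightarrow> g i \<in> carrier G" using assms(2) by auto
  have ab: "a i \<le> b i" for i using assms(5) by (simp add: le_fun_def)
  have eq: "(\<lambda>i. g i [^] b i) i = (\<lambda>i. g i [^] a i \<otimes> g i [^] (b - a) i) i" if "i \<in> K" for i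
    using ab[of i] gc[OF that] by (simp add: nat_pow_mult)
  have "\<one> = finprod G (\<lambda>i. g i [^] b i) K" using assms(4) by (simp add: BG_def)
  also have "\<dots> = finprod G (\<lambda>i. g i [^] a i \<otimes> g i [^] (b - a) i) K"
    by (rule finprod_cong') (use eq gc in auto)
  also have "\<dots> = finprod G (\<lambda>i. g i [^] a i) K \<otimes> finprod G (\<lambda>i. g i [^] (b - a) i) K"
    by (rule finprod_multf) (use gc in auto)
  also have "\<dots> = finprod G (\<lambda>i. g i [^] (b - a) i) K" using assms(3) gc by (simp add: BG_def Pi_def)
  finally have "finprod G (\<lambda>i. g i [^] (b - a) i) K = \<one>" by simp
  moreover have "\<forall>i. i \<notin> K \<longrightarrow> (b - a) i = 0" using assms(4) by (simp add: BG_def)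
  ultimately show ?thesis by (simp add: BG_def)
qed

lemma finite_atoms_BG:
  fixes G (structure)
  assumes "comm_group G" "finite K" "g ` K \<subseteq> carrier G"
  shows "finite (atoms (BG G g K))"
proof (rule finite_antichain[OF assms(2)])
  show "\<forall>x\<in>atoms (BG G g K). \<forall>s. s \<notin> K \<longrightarrow> x s = 0" by (auto simp: atoms_def BG_def)
  show "\<forall>x\<in>atoms (BG G g K). \<forall>y\<in>atoms (BG G g K). x \<le> y \<longrightarrow> x = y"
  proof (intro ballI impI)
    fix x y assume x: "x \<in> atoms (BG G g K)" and y: "y \<in> atoms (BG G g K)" and le: "x \<le> y"
    have d: "y - x \<in> BG G g K" using BG_diff[OF assms(1,3)] x y le by (auto simp: atoms_def)
    have "y = x + (y - x)" using le by (auto simp: le_fun_def fun_eq_iff)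
    then have "x = 0 \<or> y - x = 0" using y x d by (auto simp: atoms_def)
    then have "y - x = 0" using x by (auto simp: atoms_def)
    then have "y i - x i = 0" for i by (metis minus_apply zero_fun_def)
    then show "x = y" using le by (auto simp: le_fun_def fun_eq_iff intro: le_antisym)
  qed
qed


lemma qgs_iso:
  fixes T :: "('i \<Rightarrow> nat) set" and \<phi> :: "('i \<Rightarrow> nat) \<Rightarrow> ('j \<Rightarrow> nat)" and D
  assumes q: "has_quadratic_groebner_system T"
    and TD: "T \<subseteq> D" and D0: "0 \<in> D" and Dadd: "\<And>x y. x \<in> D \<Longrightarrow> y \<in> D \<Longrightarrow> x + y \<in> D"
    and inj: "inj_on \<phi> D" and phiadd: "\<And>x y. \<phi> (x + y) = \<phi> x + \<phi> y"
  shows "has_quadratic_groebner_system (\<phi> ` T)"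
proof -
  have phi0: "\<phi> 0 = 0"
  proof -
    have "\<phi> 0 + 0 = \<phi> 0 + \<phi> 0" using phiadd[of 0 0] by simp
    then show ?thesis by (metis add_left_cancel)
  qed
  have sumphi: "sum_mset (image_mset \<phi> x) = \<phi> (sum_mset x)" for x
  proof (induction x)
    case empty show ?case by (simp only: image_mset_empty sum_mset.empty phi0)
  next
    case (add a x)
    have "sum_mset (image_mset \<phi> (add_mset a x)) = \<phi> a + sum_mset (image_mset \<phi> x)"
      by (simp only: image_mset_add_mset sum_mset.add_mset)
    also have "\<dots> = \<phi> a + \<phi> (sum_mset x)" using add.IH by (simp only:)
    also have "\<dots> = \<phi> (sum_mset (add_mset a x))" by (simp only: sum_mset.add_mset phiadd)
    finally show ?case .
  qed
  have sumD: "set_mset x \<subseteq> D \<Longrightarrow> sum_mset x \<in> D" for x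
    by (induction x) (auto simp: D0 Dadd)
  have phi_zero: "x \<in> D \<Longrightarrow> \<phi> x = 0 \<longleftrightarrow> x = 0" for x
    using inj D0 phi0 by (metis inj_on_def)
  define A where "A = atoms T"
  have AT: "A \<subseteq> T" by (auto simp: A_def atoms_def)
  have atoms_eq: "atoms (\<phi> ` T) = \<phi> ` A"
  proof
    show "atoms (\<phi> ` T) \<subseteq> \<phi> ` A"
    proof
      fix a' assume a': "a' \<in> atoms (\<phi> ` T)"
      then obtain a where a: "a \<in> T" "a' = \<phi> a" by (auto simp: atoms_def)
      have "a \<noteq> 0" using a a' phi0 by (auto simp: atoms_def)
      moreover have "b = 0 \<or> c = 0" if "b \<in> T" "c \<in> T" "a = b + c" for b c
      proof -
        have "a' = \<phi> b + \<phi> c" using that a phiadd by simp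
        then have "\<phi> b = 0 \<or> \<phi> c = 0" using a' that by (auto simp: atoms_def)
        then show ?thesis using phi_zero that TD by auto
      qed
      ultimately show "a' \<in> \<phi> ` A" using a by (auto simp: A_def atoms_def)
    qed
    show "\<phi> ` A \<subseteq> atoms (\<phi> ` T)"
    proof
      fix a' assume "a' \<in> \<phi> ` A"
      then obtain a where a: "a \<in> A" "a' = \<phi> a" by auto
      have "a' \<noteq> 0" using a phi_zero TD AT by (auto simp: A_def atoms_def)
      moreover have "b' = 0 \<or> c' = 0" if bc': "b' \<in> \<phi> ` T" "c' \<in> \<phi> ` T" "a' = b' + c'" for b' c'
      proof -
        obtain b c where bc: "b \<in> T" "c \<in> T" "b' = \<phi> b" "c' = \<phi> c" using bc'(1,2) by auto
        have "\<phi> a = \<phi> (b + c)" using a bc bc'(3) phiadd by simp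
        moreover have "a \<in> D" "b + c \<in> D" using TD bc a AT by (auto intro!: Dadd)
        ultimately have "a = b + c" using inj by (simp add: inj_on_def)
        then have "b = 0 \<or> c = 0" using a bc by (auto simp: A_def atoms_def)
        then show ?thesis using bc phi0 by auto
      qed
      ultimately show "a' \<in> atoms (\<phi> ` T)" using a AT by (auto simp: atoms_def)
    qed
  qed
  have injA: "inj_on \<phi> A" using inj TD AT inj_on_subset by blast
  define \<psi> where "\<psi> = inv_into A \<phi>"
  have f1: "set_mset x \<subseteq> A \<Longrightarrow> image_mset \<psi> (image_mset \<phi> x) = x" for x
  proof -
    assume "set_mset x \<subseteq> A"
    then have "image_mset (\<psi> \<circ> \<phi>) x = image_mset id x"
      by (intro image_mset_cong) (auto simp: \<psi>_def injA inv_into_f_f subsetD)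
    then show ?thesis by (simp add: image_mset.compositionality)
  qed
  have f2: "set_mset x \<subseteq> \<phi> ` A \<Longrightarrow> image_mset \<phi> (image_mset \<psi> x) = x" for x
  proof -
    assume "set_mset x \<subseteq> \<phi> ` A"
    then have "image_mset (\<phi> \<circ> \<psi>) x = image_mset id x"
      by (intro image_mset_cong) (auto simp: \<psi>_def f_inv_into_f subsetD)
    then show ?thesis by (simp add: image_mset.compositionality)
  qed
  have f3: "set_mset x \<subseteq> \<phi> ` A \<Longrightarrow> set_mset (image_mset \<psi> x) \<subseteq> A" for x
    by (auto simp: \<psi>_def inv_into_into)
  have sumA: "set_mset x \<subseteq> A \<Longrightarrow> sum_mset x \<in> D" for x using sumD AT TD by blast
  obtain lt \<Lambda> where adm: "admissible_order A lt" and fin: "finite \<Lambda>"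
    and lam: "\<forall>(x, y) \<in> \<Lambda>. set_mset x \<subseteq> A \<and> set_mset y \<subseteq> A \<and>
            def_cong x y \<and> lt y x \<and> size x \<le> 2 \<and> size y \<le> 2"
    and grob: "\<forall>z. set_mset z \<subseteq> A \<longrightarrow> (\<forall>(x, y) \<in> \<Lambda>. \<not> x \<subseteq># z) \<longrightarrow>
            (\<forall>w. set_mset w \<subseteq> A \<longrightarrow> def_cong w z \<longrightarrow> w \<noteq> z \<longrightarrow> lt z w)"
    using q unfolding has_quadratic_groebner_system_def A_def by blast
  define lt' where "lt' x y = lt (image_mset \<psi> x) (image_mset \<psi> y)" for x y
  define \<Lambda>' where "\<Lambda>' = (\<lambda>(x, y). (image_mset \<phi> x, image_mset \<phi> y)) ` \<Lambda>"
  have dc: "set_mset x \<subseteq> \<phi> ` A \<Longrightarrow> set_mset y \<subseteq> \<phi> ` A \<Longrightarrow>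
      def_cong x y \<longleftrightarrow> def_cong (image_mset \<psi> x) (image_mset \<psi> y)" for x y
  proof -
    assume x: "set_mset x \<subseteq> \<phi> ` A" and y: "set_mset y \<subseteq> \<phi> ` A"
    have "sum_mset x = \<phi> (sum_mset (image_mset \<psi> x))" using sumphi f2[OF x] by metis
    moreover have "sum_mset y = \<phi> (sum_mset (image_mset \<psi> y))" using sumphi f2[OF y] by metis
    moreover have "sum_mset (image_mset \<psi> x) \<in> D" "sum_mset (image_mset \<psi> y) \<in> D"
      using sumA f3 x y by auto
    ultimately show ?thesis using inj by (auto simp: def_cong_def inj_on_def)
  qed
  have a1: "\<And>x. set_mset x \<subseteq> A \<Longrightarrow> \<not> lt x x"
    and a2: "\<And>x y z. set_mset x \<subseteq> A \<Longrightarrow> set_mset y \<subseteq> A \<Longrightarrow> set_mset z \<subseteq> A \<Longrightarrow>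
        lt x y \<Longrightarrow> lt y z \<Longrightarrow> lt x z"
    and a3: "\<And>x y. set_mset x \<subseteq> A \<Longrightarrow> set_mset y \<subseteq> A \<Longrightarrow> x \<noteq> y \<Longrightarrow> lt x y \<or> lt y x"
    and a4: "\<And>x y z. set_mset x \<subseteq> A \<Longrightarrow> set_mset y \<subseteq> A \<Longrightarrow> set_mset z \<subseteq> A \<Longrightarrow>
        lt x y \<Longrightarrow> lt (x + z) (y + z)"
    and a5: "\<And>x. set_mset x \<subseteq> A \<Longrightarrow> x \<noteq> {#} \<Longrightarrow> lt {#} x"
    using adm unfolding admissible_order_def by blast+
  have adm': "admissible_order (\<phi> ` A) lt'"
    unfolding admissible_order_def lt'_def
  proof (intro conjI allI impI)
    fix x assume "set_mset x \<subseteq> \<phi> ` A"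
    then show "\<not> lt (image_mset \<psi> x) (image_mset \<psi> x)" using a1 f3 by blast
  next
    fix x y z assume "set_mset x \<subseteq> \<phi> ` A" "set_mset y \<subseteq> \<phi> ` A" "set_mset z \<subseteq> \<phi> ` A"
      "lt (image_mset \<psi> x) (image_mset \<psi> y)" "lt (image_mset \<psi> y) (image_mset \<psi> z)"
    then show "lt (image_mset \<psi> x) (image_mset \<psi> z)" using a2 f3 by blast
  next
    fix x y assume x: "set_mset x \<subseteq> \<phi> ` A" and y: "set_mset y \<subseteq> \<phi> ` A" and "x \<noteq> y"
    then have "image_mset \<psi> x \<noteq> image_mset \<psi> y" using f2 by metis
    then show "lt (image_mset \<psi> x) (image_mset \<psi> y) \<or> lt (image_mset \<psi> y) (image_mset \<psi> x)"
      using a3 f3 x y by blast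
  next
    fix x y z assume "set_mset x \<subseteq> \<phi> ` A" "set_mset y \<subseteq> \<phi> ` A" "set_mset z \<subseteq> \<phi> ` A"
      "lt (image_mset \<psi> x) (image_mset \<psi> y)"
    then show "lt (image_mset \<psi> (x + z)) (image_mset \<psi> (y + z))" using a4 f3 by simp
  next
    fix x assume "set_mset x \<subseteq> \<phi> ` A" "x \<noteq> {#}"
    then show "lt (image_mset \<psi> {#}) (image_mset \<psi> x)" using a5 f3 by simp
  qed
  show ?thesis
    unfolding has_quadratic_groebner_system_def atoms_eq
  proof (intro exI conjI)
    show "admissible_order (\<phi> ` A) lt'" by (rule adm')
    show "finite \<Lambda>'" using fin by (simp add: \<Lambda>'_def)
    show "\<forall>(x, y) \<in> \<Lambda>'. set_mset x \<subseteq> \<phi> ` A \<and> set_mset y \<subseteq> \<phi> ` A \<and>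
            def_cong x y \<and> lt' y x \<and> size x \<le> 2 \<and> size y \<le> 2"
    proof
      fix p assume "p \<in> \<Lambda>'"
      then obtain x y where p: "p = (image_mset \<phi> x, image_mset \<phi> y)" and xy: "(x, y) \<in> \<Lambda>"
        by (auto simp: \<Lambda>'_def)
      then have x: "set_mset x \<subseteq> A" and y: "set_mset y \<subseteq> A" and c: "def_cong x y" and l: "lt y x"
        and s: "size x \<le> 2" "size y \<le> 2"
        using lam by auto
      have x': "set_mset (image_mset \<phi> x) \<subseteq> \<phi> ` A" and y': "set_mset (image_mset \<phi> y) \<subseteq> \<phi> ` A"
        using x y by auto
      have "def_cong (image_mset \<phi> x) (image_mset \<phi> y)" using dc[OF x' y'] f1[OF x] f1[OF y] c by simp
      moreover have "lt' (image_mset \<phi> y) (image_mset \<phi> x)" unfolding lt'_def using f1[OF x] f1[OF y] l by simp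
      ultimately show "case p of (x, y) \<Rightarrow> set_mset x \<subseteq> \<phi> ` A \<and> set_mset y \<subseteq> \<phi> ` A \<and>
            def_cong x y \<and> lt' y x \<and> size x \<le> 2 \<and> size y \<le> 2"
        using p x' y' s by simp
    qed
    show "\<forall>z. set_mset z \<subseteq> \<phi> ` A \<longrightarrow> (\<forall>(x, y) \<in> \<Lambda>'. \<not> x \<subseteq># z) \<longrightarrow>
            (\<forall>w. set_mset w \<subseteq> \<phi> ` A \<longrightarrow> def_cong w z \<longrightarrow> w \<noteq> z \<longrightarrow> lt' z w)"
    proof (intro allI impI)
      fix z w assume z: "set_mset z \<subseteq> \<phi> ` A" and nd: "\<forall>(x, y) \<in> \<Lambda>'. \<not> x \<subseteq># z"
        and w: "set_mset w \<subseteq> \<phi> ` A" and c: "def_cong w z" and ne: "w \<noteq> z"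
      have "\<forall>(x, y) \<in> \<Lambda>. \<not> x \<subseteq># image_mset \<psi> z"
      proof (clarify)
        fix x y assume "(x, y) \<in> \<Lambda>" "x \<subseteq># image_mset \<psi> z"
        then have "(image_mset \<phi> x, image_mset \<phi> y) \<in> \<Lambda>'" "image_mset \<phi> x \<subseteq># z"
          using image_mset_subseteq_mono f2[OF z] unfolding \<Lambda>'_def by (force, metis)
        then show False using nd by auto
      qed
      moreover have "image_mset \<psi> w \<noteq> image_mset \<psi> z" using f2 w z ne by metis
      ultimately show "lt' z w"
        using grob f3[OF z] f3[OF w] dc[OF w z] c unfolding lt'_def by blast
    qed
  qed
qed


definition mrg :: "'i \<Rightarrow> 'i \<Rightarrow> ('i \<Rightarrow> nat) \<Rightarrow> ('i \<Rightarrow> nat)" where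
  "mrg j j' \<beta> = \<beta>(j := \<beta> j + \<beta> j', j' := 0)"

lemma mrg_add: "mrg j j' (x + y) = mrg j j' x + mrg j j' y"
  by (auto simp: mrg_def fun_eq_iff)

lemma mrg_zero: "mrg j j' 0 = 0"
  by (auto simp: mrg_def fun_eq_iff)


lemma mrg_j: "j \<noteq> j' \<Longrightarrow> mrg j j' \<beta> j = \<beta> j + \<beta> j'"
  by (simp add: mrg_def)

lemma mrg_j': "mrg j j' \<beta> j' = 0"
  by (simp add: mrg_def)

lemma mrg_other: "i \<noteq> j \<Longrightarrow> i \<noteq> j' \<Longrightarrow> mrg j j' \<beta> i = \<beta> i"
  by (simp add: mrg_def)

lemma mrg_eq0: "j \<noteq> j' \<Longrightarrow> mrg j j' x = 0 \<longleftrightarrow> x = 0"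
proof
  assume jj: "j \<noteq> j'" and h: "mrg j j' x = 0"
  have a: "x j + x j' = 0" using h mrg_j[OF jj, of x] by (metis zero_fun_apply)
  show "x = 0"
  proof
    fix i show "x i = 0 i"
    proof (cases "i = j \<or> i = j'")
      case True then show ?thesis using a by auto
    next
      case False then show ?thesis using h mrg_other[of i j j' x] by (metis zero_fun_apply)
    qed
  qed
qed (simp add: mrg_zero)

lemma sum_mset_apply: "(sum_mset M) i = sum_mset (image_mset (\<lambda>f. f i) M)" for M :: "('i \<Rightarrow> nat) multiset"
  by (induction M) auto

lemma mrg_sum: "mrg j j' (sum_mset M) = sum_mset (image_mset (mrg j j') M)"
proof (induction M)
  case empty show ?case by (simp only: image_mset_empty sum_mset.empty mrg_zero)
next
  case (add a M)
  have "mrg j j' (sum_mset (add_mset a M)) = mrg j j' a + mrg j j' (sum_mset M)"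
    by (simp only: sum_mset.add_mset mrg_add)
  also have "\<dots> = sum_mset (image_mset (mrg j j') (add_mset a M))"
    using add.IH by (simp only: image_mset_add_mset sum_mset.add_mset)
  finally show ?case .
qed

lemma mrg_inj2: "j \<noteq> j' \<Longrightarrow> mrg j j' \<beta> = mrg j j' \<gamma> \<Longrightarrow> \<beta> j = \<gamma> j \<Longrightarrow> \<beta> = \<gamma>"
proof -
  assume jj: "j \<noteq> j'" and e: "mrg j j' \<beta> = mrg j j' \<gamma>" and ej: "\<beta> j = \<gamma> j"
  show "\<beta> = \<gamma>"
  proof
    fix i
    show "\<beta> i = \<gamma> i"
    proof (cases "i = j \<or> i = j'")
      case True
      have "\<beta> j + \<beta> j' = \<gamma> j + \<gamma> j'" using e mrg_j[OF jj] by metis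
      then show ?thesis using True ej by auto
    next
      case False then show ?thesis using e mrg_other by metis
    qed
  qed
qed

lemma mrg_split:
  assumes jj: "j \<noteq> j'" and e: "mrg j j' \<beta> = x + y" and x0: "x j' = 0" and y0: "y j' = 0"
  shows "\<exists>b c. \<beta> = b + c \<and> mrg j j' b = x \<and> mrg j j' c = y"
proof -
  define m where "m = min (x j) (\<beta> j)"
  define b where "b = x(j := m, j' := x j - m)"
  define c where "c = (\<lambda>i. \<beta> i - b i)"
  have ej: "\<beta> j + \<beta> j' = x j + y j" using e mrg_j[OF jj, of \<beta>] by (metis plus_fun_apply)
  have eo: "\<beta> i = x i + y i" if "i \<noteq> j" "i \<noteq> j'" for i
    using e mrg_other[OF that, of \<beta>] by (metis plus_fun_apply)
  have bl: "b i \<le> \<beta> i" for i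
    using ej eo[of i] jj by (auto simp: b_def m_def)
  have "\<beta> = b + c" using bl by (auto simp: c_def fun_eq_iff)
  moreover have "mrg j j' b = x"
    using jj x0 by (auto simp: mrg_def b_def m_def fun_eq_iff)
  moreover have "mrg j j' c = y"
    using jj y0 ej eo by (auto simp: mrg_def b_def c_def m_def fun_eq_iff)
  ultimately show ?thesis by blast
qed

lemma sub_image_mset:
  "x \<subseteq># image_mset f z \<Longrightarrow> \<exists>x'. x' \<subseteq># z \<and> image_mset f x' = x"
proof (induction z arbitrary: x)
  case empty then show ?case by auto
next
  case (add \<beta> z)
  show ?case
  proof (cases "f \<beta> \<in># x")
    case True
    have "x - {#f \<beta>#} \<subseteq># image_mset f z"
      using add.prems by (simp add: subset_eq_diff_conv)
    then obtain x0 where "x0 \<subseteq># z" "image_mset f x0 = x - {#f \<beta>#}" using add.IH by blast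
    then show ?thesis using True
      by (intro exI[of _ "add_mset \<beta> x0"]) (auto simp: insert_DiffM)
  next
    case False
    then have "x - {#f \<beta>#} = x" by (simp add: diff_single_trivial)
    moreover have "x - {#f \<beta>#} \<subseteq># image_mset f z"
      using add.prems by (simp add: subset_eq_diff_conv)
    ultimately obtain x0 where "x0 \<subseteq># z" "image_mset f x0 = x" using add.IH by auto
    then show ?thesis by (intro exI[of _ x0]) (auto intro: subset_mset.order_trans)
  qed
qed

lemma sum_sq_le: "sum_mset (image_mset (\<lambda>x. (f x)^2) z) \<le> (sum_mset (image_mset f z))^2"
  for f :: "'a \<Rightarrow> nat"
proof (induction z)
  case (add a z)
  have "(f a + sum_mset (image_mset f z))^2 = (f a)^2 + 2 * f a * sum_mset (image_mset f z) + (sum_mset (image_mset f z))^2"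
    by (simp add: power2_eq_square algebra_simps)
  then show ?case using add.IH by simp
qed simp


locale dbl =
  fixes T :: "('i \<Rightarrow> nat) set" and j j' :: 'i and rk :: "('i \<Rightarrow> nat) \<Rightarrow> nat" and L :: nat
  assumes jj: "j \<noteq> j'" and van: "\<And>\<alpha>. \<alpha> \<in> T \<Longrightarrow> \<alpha> j' = 0"
    and rk: "inj_on rk (atoms T)" and Lb: "\<And>a. a \<in> atoms T \<Longrightarrow> a j < L"
begin

abbreviation M where "M \<equiv> mrg j j'"

definition T' where "T' = {\<beta>. M \<beta> \<in> T}"

lemma atomsT'_iff: "\<beta> \<in> atoms T' \<longleftrightarrow> M \<beta> \<in> atoms T"
proof
  assume b: "\<beta> \<in> atoms T'"
  have "M \<beta> \<in> T" "M \<beta> \<noteq> 0" using b mrg_eq0[OF jj] by (auto simp: atoms_def T'_def)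
  moreover have "x = 0 \<or> y = 0" if xy: "x \<in> T" "y \<in> T" "M \<beta> = x + y" for x y
  proof -
    obtain b c where bc: "\<beta> = b + c" "M b = x" "M c = y"
      using mrg_split[OF jj xy(3) van[OF xy(1)] van[OF xy(2)]] by blast
    then have "b \<in> T'" "c \<in> T'" using xy by (auto simp: T'_def)
    then have "b = 0 \<or> c = 0" using b bc by (auto simp: atoms_def)
    then show ?thesis using bc mrg_zero by metis
  qed
  ultimately show "M \<beta> \<in> atoms T" by (auto simp: atoms_def)
next
  assume a: "M \<beta> \<in> atoms T"
  have "\<beta> \<in> T'" "\<beta> \<noteq> 0" using a by (auto simp: atoms_def T'_def mrg_zero)
  moreover have "b = 0 \<or> c = 0" if "b \<in> T'" "c \<in> T'" "\<beta> = b + c" for b c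
  proof -
    have "M \<beta> = M b + M c" using that(3) mrg_add by metis
    then have "M b = 0 \<or> M c = 0" using a that by (auto simp: atoms_def T'_def)
    then show ?thesis using mrg_eq0[OF jj] by blast
  qed
  ultimately show "\<beta> \<in> atoms T'" by (auto simp: atoms_def)
qed

lemma finite_atomsT':
  assumes "finite (atoms T)"
  shows "finite (atoms T')"
proof -
  have "atoms T' \<subseteq> (\<lambda>(a, t). a(j := t, j' := a j - t)) ` (SIGMA a:atoms T. {..a j})"
  proof
    fix \<beta> assume b: "\<beta> \<in> atoms T'"
    have "\<beta> = (M \<beta>)(j := \<beta> j, j' := M \<beta> j - \<beta> j)"
      using jj by (auto simp: mrg_def fun_eq_iff)
    moreover have "\<beta> j \<le> M \<beta> j" using mrg_j[OF jj] by simp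
    ultimately show "\<beta> \<in> (\<lambda>(a, t). a(j := t, j' := a j - t)) ` (SIGMA a:atoms T. {..a j})"
      using b atomsT'_iff by (intro image_eqI[of _ _ "(M \<beta>, \<beta> j)"]) auto
  qed
  moreover have "finite (SIGMA a:atoms T. {..a j})" using assms by auto
  ultimately show ?thesis by (meson finite_imageI finite_subset)
qed

definition key where "key \<beta> = rk (M \<beta>) * L + \<beta> j"

definition KK where "KK x = sum_mset (image_mset (\<lambda>\<beta>. (key \<beta>)^2) x)"

definition Pz where "Pz z \<longleftrightarrow> (\<forall>\<beta> \<gamma>. {#\<beta>, \<gamma>#} \<subseteq># z \<longrightarrow> key \<gamma> \<le> key \<beta> \<longrightarrow> \<beta> j' = 0 \<or> \<gamma> j = 0)"

lemma KK_add: "KK (x + y) = KK x + KK y"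
  by (simp add: KK_def)

lemma Pz_mono: "Pz z \<Longrightarrow> z' \<subseteq># z \<Longrightarrow> Pz z'"
  unfolding Pz_def by (meson subset_mset.order_trans)

lemma bj_lt: "\<beta> \<in> atoms T' \<Longrightarrow> \<beta> j < L"
  using Lb[of "M \<beta>"] atomsT'_iff mrg_j[OF jj, of \<beta>] by auto

lemma key_rk: "\<beta> \<in> atoms T' \<Longrightarrow> key \<gamma> \<le> key \<beta> \<Longrightarrow> rk (M \<gamma>) \<le> rk (M \<beta>)"
proof (rule ccontr)
  assume b: "\<beta> \<in> atoms T'" and k: "key \<gamma> \<le> key \<beta>" and "\<not> rk (M \<gamma>) \<le> rk (M \<beta>)"
  then have "Suc (rk (M \<beta>)) \<le> rk (M \<gamma>)" by simp
  then have "Suc (rk (M \<beta>)) * L \<le> rk (M \<gamma>) * L" by (rule mult_le_mono1)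
  moreover have "key \<beta> < Suc (rk (M \<beta>)) * L" using bj_lt[OF b] by (simp add: key_def)
  moreover have "rk (M \<gamma>) * L \<le> key \<gamma>" by (simp add: key_def)
  ultimately show False using k by linarith
qed

lemma exmax: "z \<noteq> {#} \<Longrightarrow> \<exists>\<beta>. \<beta> \<in># z \<and> (\<forall>\<delta>. \<delta> \<in># z \<longrightarrow> key \<delta> \<le> key \<beta>)"
proof -
  assume "z \<noteq> {#}"
  then have ne: "key ` set_mset z \<noteq> {}" by auto
  have "Max (key ` set_mset z) \<in> key ` set_mset z" using ne by (intro Max_in) auto
  then obtain \<beta> where "\<beta> \<in># z" "key \<beta> = Max (key ` set_mset z)" by auto
  then show ?thesis by (intro exI[of _ \<beta>]) auto
qed

lemma pair_sub: "\<beta> \<in># z \<Longrightarrow> \<delta> \<in># z - {#\<beta>#} \<Longrightarrow> {#\<beta>, \<delta>#} \<subseteq># z"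
  by (metis insert_DiffM mset_subset_eq_add_mset_cancel single_subset_iff)

lemma tval:
  assumes P: "Pz z" and b: "\<beta> \<in># z" and mx: "\<forall>\<delta>. \<delta> \<in># z \<longrightarrow> key \<delta> \<le> key \<beta>"
  shows "\<beta> j = min (M \<beta> j) (sum_mset z j)"
proof -
  have sz: "sum_mset z = \<beta> + sum_mset (z - {#\<beta>#})" using b by (simp add: sum_mset.remove)
  then have szj: "sum_mset z j = \<beta> j + sum_mset (z - {#\<beta>#}) j" by (metis plus_fun_apply)
  show ?thesis
  proof (cases "\<beta> j' = 0")
    case True
    then show ?thesis using szj mrg_j[OF jj, of \<beta>] by simp
  next
    case False
    have "\<delta> j = 0" if "\<delta> \<in># z - {#\<beta>#}" for \<delta>
    proof -
      have pd: "{#\<beta>, \<delta>#} \<subseteq># z" using pair_sub[OF b that] .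
      have kd: "key \<delta> \<le> key \<beta>" using mx that by (meson in_diffD)
      show ?thesis using P[unfolded Pz_def, rule_format, OF pd kd] False by simp
    qed
    then have "sum_mset (z - {#\<beta>#}) j = 0" unfolding sum_mset_apply by (simp add: sum_mset_0_iff)
    then show ?thesis using szj mrg_j[OF jj, of \<beta>] False by simp
  qed
qed

lemma uniq:
  "size z = n \<Longrightarrow> set_mset z \<subseteq> atoms T' \<Longrightarrow> set_mset w \<subseteq> atoms T' \<Longrightarrow> Pz z \<Longrightarrow> Pz w \<Longrightarrow>
   image_mset M z = image_mset M w \<Longrightarrow> sum_mset z j = sum_mset w j \<Longrightarrow> z = w"
proof (induction n arbitrary: z w)
  case 0
  then show ?case by auto
next
  case (Suc n)
  then have zne: "z \<noteq> {#}" by auto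
  then have wne: "w \<noteq> {#}" using Suc.prems(6) by auto
  obtain \<beta> where b: "\<beta> \<in># z" "\<forall>\<delta>. \<delta> \<in># z \<longrightarrow> key \<delta> \<le> key \<beta>" using exmax[OF zne] by blast
  obtain \<gamma> where g: "\<gamma> \<in># w" "\<forall>\<delta>. \<delta> \<in># w \<longrightarrow> key \<delta> \<le> key \<gamma>" using exmax[OF wne] by blast
  have bA: "\<beta> \<in> atoms T'" and gA: "\<gamma> \<in> atoms T'" using b g Suc.prems by auto
  have "M \<beta> \<in># image_mset M w" using b Suc.prems(6) by (metis image_eqI set_image_mset)
  then obtain \<delta> where d: "\<delta> \<in># w" "M \<delta> = M \<beta>" by auto
  have r1: "rk (M \<beta>) \<le> rk (M \<gamma>)" using key_rk[OF gA] g d by metis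
  have "M \<gamma> \<in># image_mset M z" using g Suc.prems(6) by (metis image_eqI set_image_mset)
  then obtain \<delta>' where d': "\<delta>' \<in># z" "M \<delta>' = M \<gamma>" by auto
  have r2: "rk (M \<gamma>) \<le> rk (M \<beta>)" using key_rk[OF bA] b d' by metis
  have eM: "M \<beta> = M \<gamma>"
    using r1 r2 rk bA gA atomsT'_iff by (metis inj_on_def le_antisym)
  have "\<beta> j = \<gamma> j"
    using tval[OF Suc.prems(4) b] tval[OF Suc.prems(5) g] eM Suc.prems(7) by simp
  then have bg: "\<beta> = \<gamma>" using mrg_inj2[OF jj eM] by simp
  have "z - {#\<beta>#} = w - {#\<beta>#}"
  proof (rule Suc.IH)
    show "size (z - {#\<beta>#}) = n" using Suc.prems(1) b by (simp add: size_Diff_singleton)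
    show "set_mset (z - {#\<beta>#}) \<subseteq> atoms T'" "set_mset (w - {#\<beta>#}) \<subseteq> atoms T'"
      using Suc.prems(2,3) by (meson in_diffD subset_iff)+
    show "Pz (z - {#\<beta>#})" "Pz (w - {#\<beta>#})" using Suc.prems(4,5) Pz_mono by auto
    show "image_mset M (z - {#\<beta>#}) = image_mset M (w - {#\<beta>#})"
      using Suc.prems(6) b g bg by (simp add: image_mset_Diff)
    have "sum_mset z = \<beta> + sum_mset (z - {#\<beta>#})" "sum_mset w = \<beta> + sum_mset (w - {#\<beta>#})"
      using b g bg by (simp_all add: sum_mset.remove)
    then show "sum_mset (z - {#\<beta>#}) j = sum_mset (w - {#\<beta>#}) j"
      using Suc.prems(7) by (metis plus_fun_apply add_left_cancel)
  qed
  then show "z = w" using b g bg by (metis insert_DiffM)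
qed

end


context dbl
begin

lemma sumkey: "sum_mset (image_mset key z) = sum_mset (image_mset rk (image_mset M z)) * L + sum_mset z j"
  by (induction z) (auto simp: key_def algebra_simps)

lemma exch_pair:
  assumes b: "\<beta> \<in> atoms T'" and g: "\<gamma> \<in> atoms T'" and k: "key \<gamma> \<le> key \<beta>"
    and b': "\<beta> j' \<noteq> 0" and g': "\<gamma> j \<noteq> 0"
  shows "\<exists>\<beta>1 \<gamma>1. \<beta>1 \<in> atoms T' \<and> \<gamma>1 \<in> atoms T' \<and> M \<beta>1 = M \<beta> \<and> M \<gamma>1 = M \<gamma> \<and>
     \<beta>1 + \<gamma>1 = \<beta> + \<gamma> \<and> KK {#\<beta>, \<gamma>#} < KK {#\<beta>1, \<gamma>1#}"
proof -
  define \<beta>1 where "\<beta>1 = \<beta>(j := Suc (\<beta> j), j' := \<beta> j' - 1)"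
  define \<gamma>1 where "\<gamma>1 = \<gamma>(j := \<gamma> j - 1, j' := Suc (\<gamma> j'))"
  have m1: "M \<beta>1 = M \<beta>" using jj b' by (auto simp: \<beta>1_def mrg_def fun_eq_iff)
  have m2: "M \<gamma>1 = M \<gamma>" using jj g' by (auto simp: \<gamma>1_def mrg_def fun_eq_iff)
  have s: "\<beta>1 + \<gamma>1 = \<beta> + \<gamma>" using jj b' g' by (auto simp: \<beta>1_def \<gamma>1_def fun_eq_iff)
  have k1: "key \<beta>1 = Suc (key \<beta>)" using m1 jj by (simp add: key_def \<beta>1_def)
  have k2: "Suc (key \<gamma>1) = key \<gamma>" using m2 jj g' by (simp add: key_def \<gamma>1_def)
  have "(key \<beta>)^2 + (key \<gamma>)^2 < (key \<beta>1)^2 + (key \<gamma>1)^2"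
  proof -
    define a where "a = key \<beta>"
    define c where "c = key \<gamma>1"
    have "Suc c \<le> a" using k k2 by (simp add: a_def c_def)
    then have "a^2 + (Suc c)^2 < (Suc a)^2 + c^2" by (simp add: power2_eq_square)
    then show ?thesis using k1 k2 by (simp add: a_def c_def)
  qed
  then have "KK {#\<beta>, \<gamma>#} < KK {#\<beta>1, \<gamma>1#}" by (simp add: KK_def)
  moreover have "\<beta>1 \<in> atoms T'" "\<gamma>1 \<in> atoms T'" using m1 m2 b g atomsT'_iff by auto
  ultimately show ?thesis using m1 m2 s by blast
qed

lemma exch:
  assumes sub: "{#\<beta>, \<gamma>#} \<subseteq># w" and w: "set_mset w \<subseteq> atoms T'" and k: "key \<gamma> \<le> key \<beta>"
    and b': "\<beta> j' \<noteq> 0" and g': "\<gamma> j \<noteq> 0"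
  shows "\<exists>w'. set_mset w' \<subseteq> atoms T' \<and> image_mset M w' = image_mset M w \<and> sum_mset w' = sum_mset w
     \<and> KK w < KK w'"
proof -
  have "\<beta> \<in># w" "\<gamma> \<in># w" using mset_subset_eqD[OF sub] by auto
  then have b: "\<beta> \<in> atoms T'" and g: "\<gamma> \<in> atoms T'" using w by auto
  obtain \<beta>1 \<gamma>1 where e: "\<beta>1 \<in> atoms T'" "\<gamma>1 \<in> atoms T'" "M \<beta>1 = M \<beta>" "M \<gamma>1 = M \<gamma>"
     "\<beta>1 + \<gamma>1 = \<beta> + \<gamma>" "KK {#\<beta>, \<gamma>#} < KK {#\<beta>1, \<gamma>1#}"
    using exch_pair[OF b g k b' g'] by blast
  define r where "r = w - {#\<beta>, \<gamma>#}"
  have wr: "w = r + {#\<beta>, \<gamma>#}" unfolding r_def by (simp only: subset_mset.diff_add[OF sub])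
  define w' where "w' = r + {#\<beta>1, \<gamma>1#}"
  have "set_mset r \<subseteq> atoms T'" using w wr by auto
  then have "set_mset w' \<subseteq> atoms T'" using e by (auto simp: w'_def)
  moreover have "image_mset M w' = image_mset M w" using e by (simp add: w'_def wr)
  moreover have "sum_mset w' = sum_mset w"
  proof -
    have p1: "sum_mset {#\<beta>1, \<gamma>1#} = \<beta>1 + \<gamma>1" "sum_mset {#\<beta>, \<gamma>#} = \<beta> + \<gamma>"
      by (simp_all only: sum_mset.add_mset sum_mset.empty add_0_right)
    show ?thesis unfolding w'_def wr sum_mset.union p1 e(5) ..
  qed
  moreover have "KK w < KK w'" using e(6) unfolding w'_def wr KK_add by linarith
  ultimately show ?thesis by blast
qed

lemma descent:
  assumes z: "set_mset z \<subseteq> atoms T'" and Pz: "Pz z"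
  shows "S - KK w = n \<Longrightarrow> S = (sum_mset (image_mset key z))^2 \<Longrightarrow> set_mset w \<subseteq> atoms T' \<Longrightarrow>
     image_mset M w = image_mset M z \<Longrightarrow> sum_mset w = sum_mset z \<Longrightarrow> KK w < KK z \<or> w = z"
proof (induction n arbitrary: w rule: less_induct)
  case (less n)
  have sk: "sum_mset (image_mset key w) = sum_mset (image_mset key z)"
    using less.prems(4,5) by (simp add: sumkey)
  have KS: "KK v \<le> (sum_mset (image_mset key v))^2" for v
    unfolding KK_def by (rule sum_sq_le)
  show ?case
  proof (cases "Pz w")
    case True
    have "z = w"
      by (rule uniq[OF refl z less.prems(3) Pz True]) (use less.prems(4,5) in auto)
    then show ?thesis by simp
  next
    case False
    then obtain \<beta> \<gamma> where bg: "{#\<beta>, \<gamma>#} \<subseteq># w" "key \<gamma> \<le> key \<beta>" "\<beta> j' \<noteq> 0" "\<gamma> j \<noteq> 0"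
      unfolding Pz_def by blast
    obtain w' where w': "set_mset w' \<subseteq> atoms T'" "image_mset M w' = image_mset M w"
      "sum_mset w' = sum_mset w" "KK w < KK w'"
      using exch[OF bg(1) less.prems(3) bg(2-4)] by blast
    have sk': "sum_mset (image_mset key w') = sum_mset (image_mset key z)"
      using w'(2,3) less.prems(4,5) by (simp add: sumkey)
    have "KK w' \<le> S" using KS[of w'] sk' less.prems(2) by simp
    then have "S - KK w' < n" using w'(4) less.prems(1) by linarith
    then have "KK w' < KK z \<or> w' = z"
      using less.IH[OF _ refl less.prems(2) w'(1)] w'(2,3) less.prems(4,5) by auto
    then show ?thesis using w'(4) by auto
  qed
qed

lemma lift:
  "set_mset y \<subseteq> atoms T \<Longrightarrow> M \<beta> = sum_mset y \<Longrightarrow>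
   \<exists>y'. set_mset y' \<subseteq> atoms T' \<and> image_mset M y' = y \<and> sum_mset y' = \<beta>"
proof (induction y arbitrary: \<beta>)
  case empty
  then have "M \<beta> = 0" by (simp only: sum_mset.empty)
  then have "\<beta> = 0" using mrg_eq0[OF jj] by blast
  then show ?case by auto
next
  case (add a y)
  have aT: "a \<in> atoms T" and yT: "set_mset y \<subseteq> atoms T" using add.prems by auto
  have a0: "a j' = 0" using aT van by (auto simp: atoms_def)
  have y0: "sum_mset y j' = 0" using yT van unfolding sum_mset_apply by (auto simp: atoms_def)
  have e: "M \<beta> = a + sum_mset y" using add.prems(2) by (simp only: sum_mset.add_mset)
  obtain b c where bc: "\<beta> = b + c" "M b = a" "M c = sum_mset y"
    using mrg_split[OF jj e a0 y0] by blast
  obtain y' where y': "set_mset y' \<subseteq> atoms T'" "image_mset M y' = y" "sum_mset y' = c"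
    using add.IH[OF yT bc(3)] by blast
  have "b \<in> atoms T'" using bc aT atomsT'_iff by simp
  then show ?case using y' bc by (intro exI[of _ "add_mset b y'"]) auto
qed

end


theorem qgs_double:
  fixes T :: "('i \<Rightarrow> nat) set"
  assumes q: "has_quadratic_groebner_system T" and fin: "finite (atoms T)" and jj: "j \<noteq> j'"
    and van: "\<And>\<alpha>. \<alpha> \<in> T \<Longrightarrow> \<alpha> j' = 0"
  shows "has_quadratic_groebner_system {\<beta>. mrg j j' \<beta> \<in> T}"
proof -
  obtain rk :: "('i \<Rightarrow> nat) \<Rightarrow> nat" where rkinj: "inj_on rk (atoms T)"
    using finite_imp_inj_to_nat_seg[OF fin] by blast
  define L where "L = Suc (\<Sum>a\<in>atoms T. a j)"
  have Lb: "a j < L" if "a \<in> atoms T" for a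
  proof -
    have "a j \<le> (\<Sum>a\<in>atoms T. a j)" using fin that by (intro member_le_sum) auto
    then show ?thesis by (simp add: L_def)
  qed
  interpret D: dbl T j j' rk L using jj van rkinj Lb by unfold_locales auto
  have T'eq: "{\<beta>. mrg j j' \<beta> \<in> T} = D.T'" by (simp add: D.T'_def)
  define A where "A = atoms T"
  define A' where "A' = atoms D.T'"
  have finA': "finite A'" unfolding A'_def using D.finite_atomsT'[OF fin] .
  obtain enc :: "('i \<Rightarrow> nat) \<Rightarrow> nat" where encinj: "inj_on enc A'"
    using finite_imp_inj_to_nat_seg[OF finA'] by blast
  obtain lt \<Lambda> where adm: "admissible_order A lt" and finL: "finite \<Lambda>"
    and lam: "\<forall>(x, y) \<in> \<Lambda>. set_mset x \<subseteq> A \<and> set_mset y \<subseteq> A \<and>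
            def_cong x y \<and> lt y x \<and> size x \<le> 2 \<and> size y \<le> 2"
    and grob: "\<forall>z. set_mset z \<subseteq> A \<longrightarrow> (\<forall>(x, y) \<in> \<Lambda>. \<not> x \<subseteq># z) \<longrightarrow>
            (\<forall>w. set_mset w \<subseteq> A \<longrightarrow> def_cong w z \<longrightarrow> w \<noteq> z \<longrightarrow> lt z w)"
    using q unfolding has_quadratic_groebner_system_def A_def by blast
  have a1: "\<And>x. set_mset x \<subseteq> A \<Longrightarrow> \<not> lt x x"
    and a2: "\<And>x y z. set_mset x \<subseteq> A \<Longrightarrow> set_mset y \<subseteq> A \<Longrightarrow> set_mset z \<subseteq> A \<Longrightarrow>
        lt x y \<Longrightarrow> lt y z \<Longrightarrow> lt x z"
    and a3: "\<And>x y. set_mset x \<subseteq> A \<Longrightarrow> set_mset y \<subseteq> A \<Longrightarrow> x \<noteq> y \<Longrightarrow> lt x y \<or> lt y x"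
    and a4: "\<And>x y z. set_mset x \<subseteq> A \<Longrightarrow> set_mset y \<subseteq> A \<Longrightarrow> set_mset z \<subseteq> A \<Longrightarrow>
        lt x y \<Longrightarrow> lt (x + z) (y + z)"
    and a5: "\<And>x. set_mset x \<subseteq> A \<Longrightarrow> x \<noteq> {#} \<Longrightarrow> lt {#} x"
    using adm unfolding admissible_order_def by blast+
  define \<pi> where "\<pi> x = image_mset (mrg j j') x" for x :: "('i \<Rightarrow> nat) multiset"
  have piA: "set_mset x \<subseteq> A' \<Longrightarrow> set_mset (\<pi> x) \<subseteq> A" for x
    using D.atomsT'_iff by (auto simp: \<pi>_def A_def A'_def)
  have pi_add: "\<pi> (x + y) = \<pi> x + \<pi> y" for x y by (simp add: \<pi>_def)
  have pi_empty: "\<pi> x = {#} \<longleftrightarrow> x = {#}" for x by (simp add: \<pi>_def)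
  define tb where "tb x y = (image_mset enc x < image_mset enc y)" for x y :: "('i \<Rightarrow> nat) multiset"
  have enc_eq: "x = y" if "set_mset x \<subseteq> A'" "set_mset y \<subseteq> A'" "image_mset enc x = image_mset enc y" for x y
  proof -
    have "image_mset (inv_into A' enc \<circ> enc) v = image_mset id v" if "set_mset v \<subseteq> A'" for v
      using that encinj by (intro image_mset_cong) (auto simp: inv_into_f_f subsetD)
    then have "image_mset (inv_into A' enc) (image_mset enc v) = v" if "set_mset v \<subseteq> A'" for v
      using that by (simp add: image_mset.compositionality)
    then show ?thesis using that by metis
  qed
  have tb_total: "tb x y \<or> tb y x" if "set_mset x \<subseteq> A'" "set_mset y \<subseteq> A'" "x \<noteq> y" for x y
    using enc_eq[OF that(1,2)] that(3) unfolding tb_def by (meson neqE)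
  have tb_add: "tb x y \<Longrightarrow> tb (x + z) (y + z)" for x y z
    unfolding tb_def by (simp add: add_strict_right_mono)
  have tb_trans: "tb x y \<Longrightarrow> tb y z \<Longrightarrow> tb x z" for x y z
    unfolding tb_def by (rule less_trans)
  have tb_irr: "\<not> tb x x" for x unfolding tb_def by simp
  define lt' where "lt' x y = (lt (\<pi> x) (\<pi> y) \<or> (\<pi> x = \<pi> y \<and> (D.KK y < D.KK x \<or> (D.KK x = D.KK y \<and> tb x y))))"
    for x y
  define \<Lambda>' where "\<Lambda>' = {(x, y). set_mset x \<subseteq> A' \<and> set_mset y \<subseteq> A' \<and> def_cong x y \<and> lt' y x \<and>
      size x \<le> 2 \<and> size y \<le> 2}"
  have irr: "\<not> lt' x x" if s: "set_mset x \<subseteq> A'" for x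
    using a1[OF piA[OF s]] tb_irr[of x] unfolding lt'_def by simp
  have trn: "lt' x z" if s: "set_mset x \<subseteq> A'" "set_mset y \<subseteq> A'" "set_mset z \<subseteq> A'"
      and l: "lt' x y" "lt' y z" for x y z
  proof -
    note A2 = a2[OF piA[OF s(1)] piA[OF s(2)] piA[OF s(3)]]
    show "lt' x z"
    proof (cases "\<pi> x = \<pi> y")
      case xy: True
      have h1: "D.KK y < D.KK x \<or> (D.KK x = D.KK y \<and> tb x y)"
        using l(1) xy a1[OF piA[OF s(1)]] unfolding lt'_def by auto
      show ?thesis
      proof (cases "\<pi> y = \<pi> z")
        case yz: True
        have h2: "D.KK z < D.KK y \<or> (D.KK y = D.KK z \<and> tb y z)"
          using l(2) yz a1[OF piA[OF s(2)]] unfolding lt'_def by auto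
        have "D.KK z < D.KK x \<or> (D.KK x = D.KK z \<and> tb x z)"
          using h1 h2 tb_trans[of x y z] by (elim disjE conjE) auto
        then show ?thesis using xy yz unfolding lt'_def by simp
      next
        case yz: False
        then have "lt (\<pi> y) (\<pi> z)" using l(2) unfolding lt'_def by auto
        then show ?thesis using xy unfolding lt'_def by simp
      qed
    next
      case xy: False
      then have h1: "lt (\<pi> x) (\<pi> y)" using l(1) unfolding lt'_def by auto
      show ?thesis
      proof (cases "\<pi> y = \<pi> z")
        case True
        then show ?thesis using h1 unfolding lt'_def by simp
      next
        case False
        then have "lt (\<pi> y) (\<pi> z)" using l(2) unfolding lt'_def by auto
        then show ?thesis using h1 A2 unfolding lt'_def by blast
      qed
    qed
  qed
  have tot: "lt' x y \<or> lt' y x" if s: "set_mset x \<subseteq> A'" "set_mset y \<subseteq> A'" and ne: "x \<noteq> y" for x y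
  proof (cases "\<pi> x = \<pi> y")
    case True
    then show ?thesis using tb_total[OF s ne] unfolding lt'_def by auto
  next
    case False
    then show ?thesis using a3[OF piA[OF s(1)] piA[OF s(2)]] unfolding lt'_def by auto
  qed
  have cmp: "lt' (x + z) (y + z)" if s: "set_mset x \<subseteq> A'" "set_mset y \<subseteq> A'" "set_mset z \<subseteq> A'"
      and l: "lt' x y" for x y z
  proof -
    show "lt' (x + z) (y + z)"
    proof (cases "lt (\<pi> x) (\<pi> y)")
      case True
      then show ?thesis using a4[OF piA[OF s(1)] piA[OF s(2)] piA[OF s(3)]]
        unfolding lt'_def pi_add by blast
    next
      case False
      then have h: "\<pi> x = \<pi> y" "D.KK y < D.KK x \<or> (D.KK x = D.KK y \<and> tb x y)"
        using l unfolding lt'_def by auto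
      have "D.KK (y + z) < D.KK (x + z) \<or> (D.KK (x + z) = D.KK (y + z) \<and> tb (x + z) (y + z))"
        using h(2) tb_add[of x y z] unfolding D.KK_add by auto
      then show ?thesis using h(1) unfolding lt'_def pi_add by simp
    qed
  qed
  have nem: "lt' {#} x" if s: "set_mset x \<subseteq> A'" and ne: "x \<noteq> {#}" for x
  proof -
    have "\<pi> {#} = {#}" by (simp add: \<pi>_def)
    moreover have "\<pi> x \<noteq> {#}" using ne pi_empty by simp
    ultimately show "lt' {#} x" using a5[OF piA[OF s]] unfolding lt'_def by simp
  qed
  have adm': "admissible_order A' lt'"
    unfolding admissible_order_def using irr trn tot cmp nem by blast
  have finL': "finite \<Lambda>'"
  proof -
    define B where "B = (\<Union>n\<in>{..2::nat}. multisets_of_size A' n)"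
    have "finite B" unfolding B_def using finA' by auto
    moreover have "\<Lambda>' \<subseteq> B \<times> B" by (auto simp: \<Lambda>'_def B_def multisets_of_size_def)
    ultimately show ?thesis by (meson finite_SigmaI finite_subset)
  qed
  have lamL': "\<forall>(x, y) \<in> \<Lambda>'. set_mset x \<subseteq> A' \<and> set_mset y \<subseteq> A' \<and>
            def_cong x y \<and> lt' y x \<and> size x \<le> 2 \<and> size y \<le> 2"
    by (auto simp: \<Lambda>'_def)
  have grob': "\<forall>z. set_mset z \<subseteq> A' \<longrightarrow> (\<forall>(x, y) \<in> \<Lambda>'. \<not> x \<subseteq># z) \<longrightarrow>
            (\<forall>w. set_mset w \<subseteq> A' \<longrightarrow> def_cong w z \<longrightarrow> w \<noteq> z \<longrightarrow> lt' z w)"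
  proof (intro allI impI)
    fix z w assume z: "set_mset z \<subseteq> A'" and nd: "\<forall>(x, y) \<in> \<Lambda>'. \<not> x \<subseteq># z"
      and w: "set_mset w \<subseteq> A'" and c: "def_cong w z" and ne: "w \<noteq> z"
    have nd': "\<And>x y. (x, y) \<in> \<Lambda>' \<Longrightarrow> \<not> x \<subseteq># z" using nd by blast
    have sumpi: "sum_mset (\<pi> v) = mrg j j' (sum_mset v)" for v by (simp add: \<pi>_def mrg_sum)
    have normal: "\<forall>(x, y) \<in> \<Lambda>. \<not> x \<subseteq># \<pi> z"
    proof (clarify)
      fix x y assume xy: "(x, y) \<in> \<Lambda>" and sub: "x \<subseteq># \<pi> z"
      obtain x' where x': "x' \<subseteq># z" "image_mset (mrg j j') x' = x"
        using sub_image_mset[of x "mrg j j'" z] sub by (auto simp: \<pi>_def)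
      have yA: "set_mset y \<subseteq> A" and cxy: "def_cong x y" and lyx: "lt y x" and sy: "size y \<le> 2"
        and sx: "size x \<le> 2"
        using xy lam by auto
      have "mrg j j' (sum_mset x') = sum_mset y"
        using cxy x'(2) by (simp add: def_cong_def mrg_sum)
      then obtain y' where y': "set_mset y' \<subseteq> A'" "image_mset (mrg j j') y' = y" "sum_mset y' = sum_mset x'"
        using D.lift[of y "sum_mset x'"] yA by (auto simp: A_def A'_def)
      have x'A: "set_mset x' \<subseteq> A'" using x'(1) z by (meson mset_subset_eqD subset_iff)
      have "(x', y') \<in> \<Lambda>'"
        unfolding \<Lambda>'_def using x'A y' x'(2) lyx sy sx
        by (auto simp: def_cong_def lt'_def \<pi>_def)
      then show False using nd' x'(1) by blast
    qed
    have cpi: "def_cong (\<pi> w) (\<pi> z)" using c by (simp add: def_cong_def sumpi)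
    show "lt' z w"
    proof (cases "\<pi> w = \<pi> z")
      case False
      then have "lt (\<pi> z) (\<pi> w)" using grob piA[OF z] piA[OF w] normal cpi by blast
      then show ?thesis by (simp add: lt'_def)
    next
      case True
      have Pz: "D.Pz z"
        unfolding D.Pz_def
      proof (intro allI impI)
        fix \<beta> \<gamma> assume sub: "{#\<beta>, \<gamma>#} \<subseteq># z" and k: "D.key \<gamma> \<le> D.key \<beta>"
        show "\<beta> j' = 0 \<or> \<gamma> j = 0"
        proof (rule ccontr)
          assume "\<not> (\<beta> j' = 0 \<or> \<gamma> j = 0)"
          then have b': "\<beta> j' \<noteq> 0" and g': "\<gamma> j \<noteq> 0" by auto
          have "\<beta> \<in># z" "\<gamma> \<in># z" using mset_subset_eqD[OF sub] by auto
          then have bA: "\<beta> \<in> atoms D.T'" and gA: "\<gamma> \<in> atoms D.T'" using z by (auto simp: A'_def)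
          obtain \<beta>1 \<gamma>1 where e: "\<beta>1 \<in> atoms D.T'" "\<gamma>1 \<in> atoms D.T'" "mrg j j' \<beta>1 = mrg j j' \<beta>"
            "mrg j j' \<gamma>1 = mrg j j' \<gamma>" "\<beta>1 + \<gamma>1 = \<beta> + \<gamma>" "D.KK {#\<beta>, \<gamma>#} < D.KK {#\<beta>1, \<gamma>1#}"
            using D.exch_pair[OF bA gA k b' g'] by blast
          have "({#\<beta>, \<gamma>#}, {#\<beta>1, \<gamma>1#}) \<in> \<Lambda>'"
            unfolding \<Lambda>'_def using e bA gA
            by (auto simp: A'_def def_cong_def lt'_def \<pi>_def add.assoc[symmetric])
          then show False using nd' sub by blast
        qed
      qed
      have sw: "sum_mset w = sum_mset z" using c by (simp add: def_cong_def)
      have "D.KK w < D.KK z \<or> w = z"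
        using D.descent[OF _ Pz refl refl, of w] z w True sw by (auto simp: A'_def \<pi>_def)
      then have "D.KK w < D.KK z" using ne by simp
      then show ?thesis using True by (simp add: lt'_def)
    qed
  qed
  show ?thesis
    unfolding has_quadratic_groebner_system_def T'eq A'_def[symmetric]
    using adm' finL' lamL' grob' by blast
qed


lemma BG_double:
  fixes G (structure)
  assumes cg: "comm_group G" and fK: "finite K" and gc: "g ` insert x K \<subseteq> carrier G"
    and r: "r \<in> K" and x: "x \<notin> K" and gx: "g x = g r"
  shows "BG G g (insert x K) = {\<beta>. mrg r x \<beta> \<in> BG G g K}"
proof -
  interpret comm_group G by fact
  have rx: "r \<noteq> x" using r x by auto
  have gK: "\<And>i. i \<in> K \<Longrightarrow> g i \<in> carrier G" using gc by auto
  have gxc: "g x \<in> carrier G" using gc by auto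
  have grc: "g r \<in> carrier G" using gK r by auto
  have Kr: "K = insert r (K - {r})" using r by auto
  have fKr: "finite (K - {r})" using fK by auto
  have eqv: "finprod G (\<lambda>i. g i [^] \<beta> i) (insert x K) = \<one> \<longleftrightarrow>
      finprod G (\<lambda>i. g i [^] mrg r x \<beta> i) K = \<one>" for \<beta>
  proof -
    define F where "F = finprod G (\<lambda>i. g i [^] \<beta> i) (K - {r})"
    have Fc: "F \<in> carrier G" unfolding F_def using gK by (intro finprod_closed) auto
    have "finprod G (\<lambda>i. g i [^] \<beta> i) K = g r [^] \<beta> r \<otimes> F"
      unfolding F_def by (subst Kr, subst finprod_insert) (use fKr gK grc in auto)
    then have p1: "finprod G (\<lambda>i. g i [^] \<beta> i) (insert x K) = g r [^] \<beta> x \<otimes> (g r [^] \<beta> r \<otimes> F)"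
      using fK x gK gxc gx by (subst finprod_insert) auto
    have c2: "finprod G (\<lambda>i. g i [^] mrg r x \<beta> i) (K - {r}) = F"
    proof (unfold F_def, rule finprod_cong')
      fix i assume i: "i \<in> K - {r}"
      then have "i \<noteq> r" "i \<noteq> x" using x by auto
      then show "g i [^] mrg r x \<beta> i = g i [^] \<beta> i" by (simp add: mrg_other)
    qed (use gK in auto)
    have p2: "finprod G (\<lambda>i. g i [^] mrg r x \<beta> i) K = g r [^] (\<beta> r + \<beta> x) \<otimes> F"
      by (subst Kr, subst finprod_insert) (use fKr gK grc c2 mrg_j[OF rx] in auto)
    have "g r [^] \<beta> x \<otimes> (g r [^] \<beta> r \<otimes> F) = g r [^] (\<beta> r + \<beta> x) \<otimes> F"
    proof -
      have "g r [^] \<beta> x \<otimes> (g r [^] \<beta> r \<otimes> F) = (g r [^] \<beta> x \<otimes> g r [^] \<beta> r) \<otimes> F"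
        using grc Fc by (simp add: m_assoc)
      also have "\<dots> = g r [^] (\<beta> x + \<beta> r) \<otimes> F" using grc by (simp add: nat_pow_mult)
      finally show ?thesis by (simp add: add.commute)
    qed
    then show ?thesis using p1 p2 by simp
  qed
  have supp: "(\<forall>i. i \<notin> insert x K \<longrightarrow> \<beta> i = 0) \<longleftrightarrow> (\<forall>i. i \<notin> K \<longrightarrow> mrg r x \<beta> i = 0)" for \<beta>
  proof
    assume h: "\<forall>i. i \<notin> insert x K \<longrightarrow> \<beta> i = 0"
    show "\<forall>i. i \<notin> K \<longrightarrow> mrg r x \<beta> i = 0"
    proof (intro allI impI)
      fix i assume "i \<notin> K"
      then show "mrg r x \<beta> i = 0" using h r by (cases "i = x") (auto simp: mrg_def)
    qed
  next
    assume h: "\<forall>i. i \<notin> K \<longrightarrow> mrg r x \<beta> i = 0"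
    show "\<forall>i. i \<notin> insert x K \<longrightarrow> \<beta> i = 0"
    proof (intro allI impI)
      fix i assume i: "i \<notin> insert x K"
      then have "i \<noteq> r" "i \<noteq> x" using r by auto
      then show "\<beta> i = 0" using h i mrg_other by (metis insertCI)
    qed
  qed
  show ?thesis
  proof (rule Set.set_eqI)
    fix \<beta>
    show "\<beta> \<in> BG G g (insert x K) \<longleftrightarrow> \<beta> \<in> {\<beta>. mrg r x \<beta> \<in> BG G g K}"
      unfolding BG_def mem_Collect_eq using eqv[of \<beta>] supp[of \<beta>] by blast
  qed
qed


lemma BG_iso_base:
  fixes G (structure)
  assumes cg: "comm_group G" and gc: "g ` R \<subseteq> carrier G" and inj: "inj_on g R"
  shows "BG G g R = (\<lambda>\<alpha> i. if i \<in> R then \<alpha> (g i) else 0) ` BG G id (g ` R)"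
proof -
  interpret comm_group G by fact
  define \<phi> where "\<phi> = (\<lambda>(\<alpha>::'a \<Rightarrow> nat) i. if i \<in> R then \<alpha> (g i) else (0::nat))"
  have reidx: "finprod G (\<lambda>s. id s [^] \<alpha> s) (g ` R) = finprod G (\<lambda>i. g i [^] \<alpha> (g i)) R" for \<alpha> :: "'a \<Rightarrow> nat"
  proof -
    have "(\<lambda>s. id s [^] \<alpha> s) \<in> g ` R \<rightarrow> carrier G" using gc by (auto intro!: nat_pow_closed)
    from finprod_reindex[OF this inj] show ?thesis by simp
  qed
  have cgR: "finprod G (\<lambda>i. g i [^] \<phi> \<alpha> i) R = finprod G (\<lambda>i. g i [^] \<alpha> (g i)) R" for \<alpha> :: "'a \<Rightarrow> nat"
    by (rule finprod_cong') (use gc in \<open>auto simp: \<phi>_def\<close>)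
  have "BG G g R = \<phi> ` BG G id (g ` R)"
  proof (rule Set.set_eqI, rule iffI)
    fix \<beta> assume b: "\<beta> \<in> BG G g R"
    define \<alpha> where "\<alpha> = (\<lambda>s. if s \<in> g ` R then \<beta> (inv_into R g s) else 0)"
    have ag: "\<alpha> (g i) = \<beta> i" if "i \<in> R" for i using that inj by (simp add: \<alpha>_def)
    have "\<phi> \<alpha> = \<beta>"
    proof
      fix i show "\<phi> \<alpha> i = \<beta> i"
        using ag b by (cases "i \<in> R") (auto simp: \<phi>_def BG_def)
    qed
    moreover have "\<alpha> \<in> BG G id (g ` R)"
    proof -
      have "finprod G (\<lambda>s. id s [^] \<alpha> s) (g ` R) = finprod G (\<lambda>i. g i [^] \<beta> i) R"
        unfolding reidx by (rule finprod_cong') (use gc ag in auto)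
      then show ?thesis using b by (auto simp: BG_def \<alpha>_def)
    qed
    ultimately show "\<beta> \<in> \<phi> ` BG G id (g ` R)" by blast
  next
    fix \<beta> assume "\<beta> \<in> \<phi> ` BG G id (g ` R)"
    then obtain \<alpha> where a: "\<alpha> \<in> BG G id (g ` R)" "\<beta> = \<phi> \<alpha>" by blast
    have "finprod G (\<lambda>i. g i [^] \<beta> i) R = \<one>" using a cgR reidx by (simp add: BG_def)
    moreover have "\<forall>i. i \<notin> R \<longrightarrow> \<beta> i = 0" using a by (simp add: \<phi>_def)
    ultimately show "\<beta> \<in> BG G g R" by (simp add: BG_def)
  qed
  then show ?thesis by (simp add: \<phi>_def)
qed

theorem corollary5p6:
  fixes G (structure) and g :: "nat \<Rightarrow> 'a" and m :: nat
  assumes "comm_group G"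
    and "\<forall>i<m. g i \<in> carrier G"
    and "has_quadratic_groebner_system (BG G id (g ` {..<m}))"
  shows "has_quadratic_groebner_system (BG G g {..<m})"
proof -
  note cg = assms(1)
  have gc: "\<And>i. i < m \<Longrightarrow> g i \<in> carrier G" using assms(2) by blast
  define R where "R = {i. i < m \<and> (\<forall>k<i. g k \<noteq> g i)}"
  have Rsub: "R \<subseteq> {..<m}" by (auto simp: R_def)
  have rep: "\<exists>r\<in>R. g r = g x" if "x < m" for x
  proof -
    define r where "r = (LEAST k. g k = g x)"
    have gr: "g r = g x" unfolding r_def by (rule LeastI) (rule refl)
    have rx: "r \<le> x" unfolding r_def by (rule Least_le) (rule refl)
    have "g k \<noteq> g r" if "k < r" for k using not_less_Least[of k "\<lambda>k. g k = g x"] that gr by (simp add: r_def)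
    then have "r \<in> R" using rx that by (auto simp: R_def)
    then show ?thesis using gr by blast
  qed
  have injR: "inj_on g R"
  proof (rule inj_onI)
    fix i k assume i: "i \<in> R" and k: "k \<in> R" and e: "g i = g k"
    show "i = k"
    proof (rule ccontr)
      assume "i \<noteq> k"
      then consider "i < k" | "k < i" by linarith
      then show False using i k e by cases (auto simp: R_def)
    qed
  qed
  have gR: "g ` R = g ` {..<m}"
  proof
    show "g ` R \<subseteq> g ` {..<m}" using Rsub by auto
    show "g ` {..<m} \<subseteq> g ` R" using rep by (auto simp: image_iff) (metis)
  qed
  have gRc: "g ` R \<subseteq> carrier G" using Rsub gc by auto
  define D where "D = {\<alpha> :: 'a \<Rightarrow> nat. \<forall>s. s \<notin> g ` R \<longrightarrow> \<alpha> s = 0}"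
  define \<phi> where "\<phi> = (\<lambda>(\<alpha>::'a \<Rightarrow> nat) i. if i \<in> R then \<alpha> (g i) else (0::nat))"
  have base: "has_quadratic_groebner_system (BG G g R)"
  proof -
    have "has_quadratic_groebner_system (\<phi> ` BG G id (g ` R))"
    proof (rule qgs_iso)
      show "has_quadratic_groebner_system (BG G id (g ` R))" using assms(3) gR by simp
      show "BG G id (g ` R) \<subseteq> D" by (auto simp: BG_def D_def)
      show "0 \<in> D" by (simp add: D_def)
      show "\<And>x y. x \<in> D \<Longrightarrow> y \<in> D \<Longrightarrow> x + y \<in> D" by (simp add: D_def)
      show "inj_on \<phi> D"
      proof (rule inj_onI)
        fix x y assume x: "x \<in> D" and y: "y \<in> D" and e: "\<phi> x = \<phi> y"
        show "x = y"
        proof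
          fix s show "x s = y s"
          proof (cases "s \<in> g ` R")
            case True
            then obtain i where i: "i \<in> R" "s = g i" by blast
            have "\<phi> x i = \<phi> y i" using e by simp
            then show ?thesis using i by (simp add: \<phi>_def)
          next
            case False then show ?thesis using x y by (simp add: D_def)
          qed
        qed
      qed
      show "\<And>x y. \<phi> (x + y) = \<phi> x + \<phi> y" by (auto simp: \<phi>_def fun_eq_iff)
    qed
    then show ?thesis using BG_iso_base[OF cg gRc injR] by (simp add: \<phi>_def)
  qed
  have step: "finite X \<Longrightarrow> X \<subseteq> {..<m} - R \<Longrightarrow> has_quadratic_groebner_system (BG G g (R \<union> X))" for X
  proof (induction X rule: finite_induct)
    case empty
    then show ?case using base by simp
  next
    case (insert x X)
    have xm: "x < m" and xR: "x \<notin> R" and XR: "X \<subseteq> {..<m} - R" using insert.prems by auto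
    obtain r where r: "r \<in> R" "g r = g x" using rep[OF xm] by blast
    define K where "K = R \<union> X"
    have fK: "finite K" using insert.hyps(1) Rsub finite_subset[of R "{..<m}"] by (auto simp: K_def)
    have Km: "K \<subseteq> {..<m}" using Rsub XR by (auto simp: K_def)
    have xK: "x \<notin> K" using xR insert.hyps(2) by (auto simp: K_def)
    have rK: "r \<in> K" using r by (auto simp: K_def)
    have gc': "g ` insert x K \<subseteq> carrier G" using Km xm gc by auto
    have IH: "has_quadratic_groebner_system (BG G g K)" using insert.IH XR by (simp add: K_def)
    have fa: "finite (atoms (BG G g K))"
      by (rule finite_atoms_BG[OF cg fK]) (use gc' in auto)
    have rx: "r \<noteq> x" using rK xK by auto
    have van: "\<alpha> x = 0" if "\<alpha> \<in> BG G g K" for \<alpha> using that xK by (simp add: BG_def)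
    have "has_quadratic_groebner_system {\<beta>. mrg r x \<beta> \<in> BG G g K}"
      by (rule qgs_double[OF IH fa rx]) (use van in auto)
    moreover have "BG G g (insert x K) = {\<beta>. mrg r x \<beta> \<in> BG G g K}"
      by (rule BG_double[OF cg fK gc' rK xK]) (use r in auto)
    moreover have "R \<union> insert x X = insert x K" by (auto simp: K_def)
    ultimately show ?case by simp
  qed
  have "R \<union> ({..<m} - R) = {..<m}" using Rsub by auto
  then show ?thesis using step[of "{..<m} - R"] by simp
qed


end
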